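(* Consider the following convex (second-order cone) optimal control problem for $N$ electric vehicles (EVs) charged through a single transformer over $K$ time steps $k=0,\dots,K-1$. The decision variables are the charging currents $i_n(k)$, states of charge $s_n(k+1)$ ($n=1,\dots,N$), total currents $i_{\text{total}}(k)$, auxiliary variables $e(k)$, and transformer temperatures $T(k+1)$: \begin{align*} \min\;& \sum_{n=1}^N\sum_{k=0}^{K-1} q_n\,(s_n(k+1)-1)^2 + r_n\,(i_n(k))^2\\ \text{s.t. }& T(k+1)=\tau T(k)+\gamma e(k)+\rho T_a(k),\\ & e(k)\ge (i_{\text{total}}(k))^2,\\ & s_n(k+1)=s_n(k)+\eta_n i_n(k),\\ & i_{\text{total}}(k)=i_d(k)+\sum_{n=1}^N i_n(k),\\ & T(k+1)\le T^{\max},\\ & s_n(k+1)\in[\hat s_n(k+1),\,1],\\ & i_n(k)\in[0,\,i_n^{\max}],\\ & T(0)=T_{\text{meas}},\quad s_n(0)=s_{\text{meas},n}, \end{align*} for all $k=0,\dots,K-1$ and $n=1,\dots,N$. Fix EV parameters $r_n\ge 0$ and $\eta_n,q_n>0$. When $r_n>0$, let $M_n\doteq \frac{q_n}{r_n}\eta_n^2$. Suppose that at an optimal solution of this problem there exist an index $n$ and a time step $k$ such that $i_n(k)<i_n^{\max}$ and $$s_n(k+1)<\begin{cases}1 & \text{if } r_n=0,\\[2pt] \dfrac{M_n+s_n(0)}{M_n+1} & \text{if } r_n>0.\end{cases}$$ Then $e(l)=(i_{\text{total}}(l))^2$ for all $l\le k$.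
   Context: The problem arises from a discrete-time transformer hot-spot temperature model $T(k+1)=\tau T(k)+\gamma (i_{\text{total}}(k))^2+\rho T_a(k)$, in which the quadratic equality has been relaxed to the epigraph inequality $e(k)\ge (i_{\text{total}}(k))^2$. The parameters are as follows: - $\tau=e^{-b\Delta t}\in(0,1)$ for some $b,\Delta t>0$, and $\rho=1-\tau$; - $\gamma>0$; - $T_a(k)$ is a given (shifted) ambient temperature sequence; - $i_d(k)\ge 0$ is a given background current; - $T^{\max}$ is the transformer temperature limit; - $i_n^{\max}>0$ is the current limit of EV $n$; - $\eta_n>0$ is the normalized charging ratio of EV $n$; - $s_{\text{meas},n}\in[0,1]$ is the measured initial state of charge and $T_{\text{meas}}$ the measured initial temperature; - $\hat s_n(k+1)=\bar s_n$ if $k+1\ge \bar k_n$ and $\hat s_n(k+1)=0$ otherwise, where $\bar s_n\in[0,1]$ is a minimum required state of charge and $\bar k_n\in\{0,\dots,K\}$ the latest time step by which it must be reached. *)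

theory Defs
  imports Complex_Main
begin

text \<open>EVs are indexed by n < N (0-based), time steps by k < K.
  Variables: i n k (charging current), s n k (state of charge, k = 0..K),
  itot k, e k (k < K), T k (k = 0..K).\<close>

definition shat :: "(nat \<Rightarrow> real) \<Rightarrow> (nat \<Rightarrow> nat) \<Rightarrow> nat \<Rightarrow> nat \<Rightarrow> real" where
  "shat sbar kbar n j = (if kbar n \<le> j then sbar n else 0)"

definition feasible ::
  "nat \<Rightarrow> nat \<Rightarrow> real \<Rightarrow> real \<Rightarrow> real \<Rightarrow> (nat \<Rightarrow> real) \<Rightarrow> (nat \<Rightarrow> real) \<Rightarrow> real
   \<Rightarrow> (nat \<Rightarrow> real) \<Rightarrow> (nat \<Rightarrow> real) \<Rightarrow> (nat \<Rightarrow> real) \<Rightarrow> real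
   \<Rightarrow> (nat \<Rightarrow> real) \<Rightarrow> (nat \<Rightarrow> nat)
   \<Rightarrow> (nat \<Rightarrow> nat \<Rightarrow> real) \<Rightarrow> (nat \<Rightarrow> nat \<Rightarrow> real) \<Rightarrow> (nat \<Rightarrow> real) \<Rightarrow> (nat \<Rightarrow> real)
   \<Rightarrow> (nat \<Rightarrow> real) \<Rightarrow> bool" where
  "feasible N K tau gamma rho Ta idc Tmax imax eta smeas Tmeas sbar kbar i s itot e T \<longleftrightarrow>
     T 0 = Tmeas \<and> (\<forall>n<N. s n 0 = smeas n) \<and>
     (\<forall>k<K.
        T (Suc k) = tau * T k + gamma * e k + rho * Ta k \<and>
        e k \<ge> (itot k)\<^sup>2 \<and>
        itot k = idc k + (\<Sum>n<N. i n k) \<and>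
        T (Suc k) \<le> Tmax \<and>
        (\<forall>n<N. s n (Suc k) = s n k + eta n * i n k \<and>
               shat sbar kbar n (Suc k) \<le> s n (Suc k) \<and> s n (Suc k) \<le> 1 \<and>
               0 \<le> i n k \<and> i n k \<le> imax n))"

definition cost ::
  "nat \<Rightarrow> nat \<Rightarrow> (nat \<Rightarrow> real) \<Rightarrow> (nat \<Rightarrow> real)
   \<Rightarrow> (nat \<Rightarrow> nat \<Rightarrow> real) \<Rightarrow> (nat \<Rightarrow> nat \<Rightarrow> real) \<Rightarrow> real" where
  "cost N K q r i s = (\<Sum>n<N. \<Sum>k<K. q n * (s n (Suc k) - 1)\<^sup>2 + r n * (i n k)\<^sup>2)"

definition optimal ::
  "nat \<Rightarrow> nat \<Rightarrow> real \<Rightarrow> real \<Rightarrow> real \<Rightarrow> (nat \<Rightarrow> real) \<Rightarrow> (nat \<Rightarrow> real) \<Rightarrow> real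
   \<Rightarrow> (nat \<Rightarrow> real) \<Rightarrow> (nat \<Rightarrow> real) \<Rightarrow> (nat \<Rightarrow> real) \<Rightarrow> real
   \<Rightarrow> (nat \<Rightarrow> real) \<Rightarrow> (nat \<Rightarrow> nat) \<Rightarrow> (nat \<Rightarrow> real) \<Rightarrow> (nat \<Rightarrow> real)
   \<Rightarrow> (nat \<Rightarrow> nat \<Rightarrow> real) \<Rightarrow> (nat \<Rightarrow> nat \<Rightarrow> real) \<Rightarrow> (nat \<Rightarrow> real) \<Rightarrow> (nat \<Rightarrow> real)
   \<Rightarrow> (nat \<Rightarrow> real) \<Rightarrow> bool" where
  "optimal N K tau gamma rho Ta idc Tmax imax eta smeas Tmeas sbar kbar q r i s itot e T \<longleftrightarrow>
     feasible N K tau gamma rho Ta idc Tmax imax eta smeas Tmeas sbar kbar i s itot e T \<and>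
     (\<forall>i' s' itot' e' T'.
        feasible N K tau gamma rho Ta idc Tmax imax eta smeas Tmeas sbar kbar i' s' itot' e' T' \<longrightarrow>
        cost N K q r i s \<le> cost N K q r i' s')"

end

theory Submission imports Defs begin

primrec Trec :: "real \<Rightarrow> real \<Rightarrow> real \<Rightarrow> real \<Rightarrow> (nat \<Rightarrow> real) \<Rightarrow> (nat \<Rightarrow> real) \<Rightarrow> nat \<Rightarrow> real" where
  "Trec T0 tau gamma rho Ta e 0 = T0"
| "Trec T0 tau gamma rho Ta e (Suc j) = tau * Trec T0 tau gamma rho Ta e j + gamma * e j + rho * Ta j"

lemma Trec_diff:
  fixes T e e' :: "nat \<Rightarrow> real"
  assumes T0: "T 0 = T0"
    and TS: "\<And>j. j < K \<Longrightarrow> T (Suc j) = tau * T j + gamma * e j + rho * Ta j"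
    and e'_def: "\<And>j. e' j = e j - (if j = l then d else 0) + (if j = k then d * tau ^ (k - l) else 0)"
    and lk: "l \<le> k"
  shows "j \<le> K \<Longrightarrow> Trec T0 tau gamma rho Ta e' j - T j =
           (if l < j \<and> j \<le> k then - gamma * d * tau ^ (j - l - 1) else 0)"
proof (induction j)
  case 0
  then show ?case using T0 by simp
next
  case (Suc j)
  then have jK: "j < K" by simp
  have IH: "Trec T0 tau gamma rho Ta e' j - T j = (if l < j \<and> j \<le> k then - gamma * d * tau ^ (j - l - 1) else 0)"
    using Suc by simp
  have "Trec T0 tau gamma rho Ta e' (Suc j) - T (Suc j) = tau * (Trec T0 tau gamma rho Ta e' j - T j) + gamma * (e' j - e j)"
    using TS[OF jK] by (simp add: algebra_simps)
  also have "\<dots> = (if l < Suc j \<and> Suc j \<le> k then - gamma * d * tau ^ (Suc j - l - 1) else 0)"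
  proof -
    consider "j < l" | "j = l" "l < k" | "l < j" "j < k" | "j = k" "l < k" | "j = k" "l = k" | "k < j"
      using lk by linarith
    then show ?thesis
    proof cases
      case 1 then show ?thesis using IH e'_def[of j] lk by simp
    next
      case 2 then show ?thesis using IH e'_def[of j] by simp
    next
      case 3
      have "Suc j - l - 1 = Suc (j - l - 1)" using 3 by simp
      then have "tau * tau ^ (j - l - 1) = tau ^ (Suc j - l - 1)" by simp
      then show ?thesis using 3 IH e'_def[of j] by simp
    next
      case 4
      have "k - l = Suc (j - l - 1)" using 4 by simp
      then have "tau * tau ^ (j - l - 1) = tau ^ (k - l)" by simp
      then show ?thesis using 4 IH e'_def[of j] by simp
    next
      case 5 then show ?thesis using IH e'_def[of j] by simp
    next
      case 6 then show ?thesis using IH e'_def[of j] lk by simp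
    qed
  qed
  finally show ?case .
qed

lemma s_mono0:
  assumes "\<And>j. j < K \<Longrightarrow> s (Suc j) = s j + et * ii j" "\<And>j. j < K \<Longrightarrow> 0 \<le> ii j" "et > 0"
  shows "j \<le> K \<Longrightarrow> s 0 \<le> (s j :: real)"
proof (induction j)
  case 0 then show ?case by simp
next
  case (Suc j)
  then have "j < K" by simp
  then have "s j \<le> s (Suc j)" using assms(1,2)[of j] assms(3) by simp
  then show ?case using Suc by simp
qed

lemma max_diff_bounds:
  fixes x y a :: real
  assumes "x \<le> y"
  shows "0 \<le> max y a - max x a" "max y a - max x a \<le> y - x"
  using assms by (auto simp: max_def)

theorem theorem1:
  fixes N K :: nat and b dt tau gamma rho Tmax Tmeas :: real
    and Ta idc imax eta smeas sbar q r :: "nat \<Rightarrow> real" and kbar :: "nat \<Rightarrow> nat"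
    and i s :: "nat \<Rightarrow> nat \<Rightarrow> real" and itot e T :: "nat \<Rightarrow> real"
    and n k :: nat
  assumes "b > 0" and "dt > 0" and "tau = exp (- b * dt)" and "rho = 1 - tau"
    and "gamma > 0"
    and "\<And>k. idc k \<ge> 0"
    and "\<And>m. m < N \<Longrightarrow> imax m > 0"
    and "\<And>m. m < N \<Longrightarrow> eta m > 0"
    and "\<And>m. m < N \<Longrightarrow> q m > 0"
    and "\<And>m. m < N \<Longrightarrow> r m \<ge> 0"
    and "\<And>m. m < N \<Longrightarrow> 0 \<le> smeas m \<and> smeas m \<le> 1"
    and "\<And>m. m < N \<Longrightarrow> 0 \<le> sbar m \<and> sbar m \<le> 1"
    and "\<And>m. m < N \<Longrightarrow> kbar m \<le> K"
    and opt: "optimal N K tau gamma rho Ta idc Tmax imax eta smeas Tmeas sbar kbar q r i s itot e T"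
    and "n < N" and "k < K"
    and "i n k < imax n"
    and "s n (Suc k) <
           (if r n = 0 then 1
            else (q n / r n * (eta n)\<^sup>2 + s n 0) / (q n / r n * (eta n)\<^sup>2 + 1))"
  shows "\<forall>l\<le>k. e l = (itot l)\<^sup>2"
proof (rule ccontr)
  assume "\<not> ?thesis"
  then obtain l where lk: "l \<le> k" and el_ne: "e l \<noteq> (itot l)\<^sup>2" by auto
  have nN: "n < N" and kK: "k < K" and gpos: "gamma > 0" using assms by auto
  have feas: "feasible N K tau gamma rho Ta idc Tmax imax eta smeas Tmeas sbar kbar i s itot e T"
    using opt unfolding optimal_def by blast
  have minc: "\<And>i' s' itot' e' T'. feasible N K tau gamma rho Ta idc Tmax imax eta smeas Tmeas sbar kbar i' s' itot' e' T'
      \<Longrightarrow> cost N K q r i s \<le> cost N K q r i' s'"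
    using opt unfolding optimal_def by blast
  have FT0: "T 0 = Tmeas" and Fs0: "\<And>m. m < N \<Longrightarrow> s m 0 = smeas m"
    using feas unfolding feasible_def by auto
  have FT: "\<And>j. j < K \<Longrightarrow> T (Suc j) = tau * T j + gamma * e j + rho * Ta j"
    using feas unfolding feasible_def by blast
  have Fe: "\<And>j. j < K \<Longrightarrow> e j \<ge> (itot j)\<^sup>2"
    using feas unfolding feasible_def by blast
  have Fit: "\<And>j. j < K \<Longrightarrow> itot j = idc j + (\<Sum>m<N. i m j)"
    using feas unfolding feasible_def by blast
  have FTm: "\<And>j. j < K \<Longrightarrow> T (Suc j) \<le> Tmax"
    using feas unfolding feasible_def by blast
  have Fs: "\<And>j m. j < K \<Longrightarrow> m < N \<Longrightarrow> s m (Suc j) = s m j + eta m * i m j"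
    using feas unfolding feasible_def by blast
  have Fsh: "\<And>j m. j < K \<Longrightarrow> m < N \<Longrightarrow> shat sbar kbar m (Suc j) \<le> s m (Suc j)"
    using feas unfolding feasible_def by blast
  have Fs1: "\<And>j m. j < K \<Longrightarrow> m < N \<Longrightarrow> s m (Suc j) \<le> 1"
    using feas unfolding feasible_def by blast
  have Fi0: "\<And>j m. j < K \<Longrightarrow> m < N \<Longrightarrow> 0 \<le> i m j"
    using feas unfolding feasible_def by blast
  have Fim: "\<And>j m. j < K \<Longrightarrow> m < N \<Longrightarrow> i m j \<le> imax m"
    using feas unfolding feasible_def by blast
  have tau_pos: "tau > 0" using assms(3) by simp
  have lK: "l < K" using lk kK by simp
  have el: "e l > (itot l)\<^sup>2" using Fe[OF lK] el_ne by simp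
  define d where "d = e l - (itot l)\<^sup>2"
  have dpos: "d > 0" using el d_def by simp
  define e' where "e' j = e j - (if j = l then d else 0) + (if j = k then d * tau ^ (k - l) else 0)" for j
  define T' where "T' = Trec Tmeas tau gamma rho Ta e'"
  have Tle: "T' j \<le> T j" if "j \<le> K" for j
  proof -
    have "T' j - T j = (if l < j \<and> j \<le> k then - gamma * d * tau ^ (j - l - 1) else 0)"
      unfolding T'_def using Trec_diff[of T Tmeas K tau gamma e rho Ta e' l d k, OF FT0 FT e'_def lk that] by simp
    moreover have "gamma * d * tau ^ (j - l - 1) \<ge> 0" using gpos dpos tau_pos by simp
    ultimately show ?thesis by (auto split: if_splits)
  qed
  have eta_pos: "eta n > 0" and qpos: "q n > 0" and rnn: "r n \<ge> 0" using assms nN by auto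
  have itot_nn: "itot j \<ge> 0" if "j < K" for j
  proof -
    have "(\<Sum>m<N. i m j) \<ge> 0" using Fi0 that by (intro sum_nonneg) auto
    then show ?thesis using Fit[OF that] assms(6)[of j] by simp
  qed
  define E where "E = e' k"
  have E_gt: "E > (itot k)\<^sup>2"
  proof (cases "l = k")
    case True
    then show ?thesis using el unfolding E_def e'_def by simp
  next
    case False
    have "d * tau ^ (k - l) > 0" using dpos tau_pos by simp
    then show ?thesis using Fe[OF kK] False unfolding E_def e'_def by simp
  qed
  define sk where "sk = s n (Suc k)"
  have s0k: "s n 0 \<le> s n k"
    using s_mono0[of K "s n" "eta n" "i n" k] Fs[OF _ nN] Fi0[OF _ nN] eta_pos kK by simp
  have sk_eq: "sk = s n k + eta n * i n k" using Fs[OF kK nN] sk_def by simp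
  have sk1: "sk < 1"
  proof (cases "r n = 0")
    case True then show ?thesis using assms(18) sk_def by simp
  next
    case False
    define M where "M = q n / r n * (eta n)\<^sup>2"
    have M0: "M \<ge> 0" using qpos rnn M_def by simp
    have "sk < (M + s n 0) / (M + 1)" using assms(18) False sk_def M_def by simp
    also have "\<dots> \<le> 1" using M0 assms(11)[OF nN] Fs0[OF nN] by simp
    finally show ?thesis .
  qed
  define G where "G = q n * eta n * (1 - sk) - r n * i n k"
  have Gpos: "G > 0"
  proof (cases "r n = 0")
    case True then show ?thesis using qpos eta_pos sk1 G_def by simp
  next
    case False
    then have rpos: "r n > 0" using rnn by simp
    define M where "M = q n / r n * (eta n)\<^sup>2"
    have M0: "M \<ge> 0" using qpos rnn M_def by simp
    have "sk < (M + s n 0) / (M + 1)" using assms(18) False sk_def M_def by simp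
    then have "sk * (M + 1) < M + s n 0" using M0 by (simp add: field_simps)
    then have "M * (1 - sk) > sk - s n 0" by (simp add: algebra_simps)
    moreover have "sk - s n 0 \<ge> eta n * i n k" using sk_eq s0k by simp
    ultimately have "M * (1 - sk) > eta n * i n k" by simp
    then have "r n * (M * (1 - sk)) > r n * (eta n * i n k)" using rpos by simp
    moreover have "r n * (M * (1 - sk)) = eta n * (q n * eta n * (1 - sk))"
      using rpos unfolding M_def by (simp add: power2_eq_square field_simps)
    ultimately have "eta n * (q n * eta n * (1 - sk)) > eta n * (r n * i n k)" by (simp add: algebra_simps)
    then have "q n * eta n * (1 - sk) > r n * i n k" using eta_pos by simp
    then show ?thesis using G_def by simp
  qed
  define D where "D = q n * (eta n)\<^sup>2 + r n"
  have Dpos: "D > 0" using qpos eta_pos rnn D_def by (simp add: add_pos_nonneg)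
  define eps where "eps = min (min (imax n - i n k) ((1 - sk) / eta n)) (min (sqrt E - itot k) (G / D))"
  have sqE: "sqrt E > itot k"
    using E_gt itot_nn[OF kK] by (metis abs_of_nonneg real_less_rsqrt)
  have eps_pos: "eps > 0" unfolding eps_def using assms(17) sk1 eta_pos sqE Gpos Dpos by simp
  have eps1: "i n k + eps \<le> imax n" and eps2: "eps \<le> (1 - sk) / eta n"
    and eps3: "itot k + eps \<le> sqrt E" and eps4: "eps \<le> G / D"
    unfolding eps_def by auto
  have sq: "(itot k + eps)\<^sup>2 \<le> E"
  proof -
    have "(itot k + eps)\<^sup>2 \<le> (sqrt E)\<^sup>2"
      using eps3 itot_nn[OF kK] eps_pos by (intro power_mono) auto
    moreover have "0 \<le> (itot k)\<^sup>2" by simp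
    then have "E \<ge> 0" using E_gt by linarith
    ultimately show ?thesis by simp
  qed
  define a where "a = sk + eta n * eps"
  have a1: "a \<le> 1" using eps2 eta_pos unfolding a_def by (simp add: field_simps)
  have a_gt: "a > sk" using eps_pos eta_pos unfolding a_def by simp
  define s' where "s' m j = (if m = n \<and> k < j then max (s n j) a else s m j)" for m j
  define i' where "i' m j = (if m = n then (if j = k then i n k + eps else if k < j then
      (max (s n (Suc j)) a - max (s n j) a) / eta n else i n j) else i m j)" for m j
  define itot' where "itot' j = idc j + (\<Sum>m<N. i' m j)" for j
  have i'_nn: "0 \<le> i' m j" if "m < N" "j < K" for m j
    using Fi0[OF that(2,1)] eps_pos max_diff_bounds(1)[of "s n j" "s n (Suc j)" a]
      Fs[OF that(2) nN] Fi0[OF that(2) nN] eta_pos unfolding i'_def by auto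
  have i'_le: "i' m j \<le> i m j" if "m < N" "j < K" "j \<noteq> k" for m j
  proof (cases "m = n \<and> k < j")
    case True
    have "max (s n (Suc j)) a - max (s n j) a \<le> eta n * i n j"
      using max_diff_bounds(2)[of "s n j" "s n (Suc j)" a] Fs[OF that(2) nN] Fi0[OF that(2) nN] eta_pos by simp
    then show ?thesis using True eta_pos unfolding i'_def by (simp add: field_simps)
  next
    case False then show ?thesis using that unfolding i'_def by auto
  qed
  have itot'_k: "itot' k = itot k + eps"
  proof -
    have "(\<Sum>m<N. i' m k) = (\<Sum>m<N. i m k + (if m = n then eps else 0))"
      by (rule sum.cong) (auto simp: i'_def)
    also have "\<dots> = (\<Sum>m<N. i m k) + eps" using nN by (simp add: sum.distrib)
    finally show ?thesis using Fit[OF kK] unfolding itot'_def by simp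
  qed
  have itot'_lt: "itot' j = itot j" if "j < k" for j
  proof -
    have "(\<Sum>m<N. i' m j) = (\<Sum>m<N. i m j)"
      by (rule sum.cong) (use that in \<open>auto simp: i'_def\<close>)
    then show ?thesis using Fit[of j] that kK unfolding itot'_def by simp
  qed
  have itot'_gt: "0 \<le> itot' j \<and> itot' j \<le> itot j" if "k < j" "j < K" for j
  proof -
    have "(\<Sum>m<N. i' m j) \<le> (\<Sum>m<N. i m j)"
      by (rule sum_mono) (use that i'_le in auto)
    moreover have "(\<Sum>m<N. i' m j) \<ge> 0" using i'_nn that by (intro sum_nonneg) auto
    ultimately show ?thesis using Fit[OF that(2)] assms(6)[of j] unfolding itot'_def by simp
  qed
  have s'_ge: "s m j \<le> s' m j" for m j unfolding s'_def by auto
  have feas': "feasible N K tau gamma rho Ta idc Tmax imax eta smeas Tmeas sbar kbar i' s' itot' e' T'"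
    unfolding feasible_def
  proof (intro conjI allI impI)
    show "T' 0 = Tmeas" unfolding T'_def by simp
    fix m assume "m < N" then show "s' m 0 = smeas m" using Fs0 unfolding s'_def by simp
  next
    fix j assume jK: "j < K"
    show "T' (Suc j) = tau * T' j + gamma * e' j + rho * Ta j" unfolding T'_def by simp
    show "itot' j = idc j + (\<Sum>m<N. i' m j)" unfolding itot'_def by simp
    show "T' (Suc j) \<le> Tmax" using Tle[of "Suc j"] FTm[OF jK] jK by simp
    show "(itot' j)\<^sup>2 \<le> e' j"
    proof -
      consider "j < k" | "j = k" | "k < j" by linarith
      then show ?thesis
      proof cases
        case 1
        then show ?thesis using itot'_lt[OF 1] Fe[OF jK] d_def unfolding e'_def by auto
      next
        case 2
        then show ?thesis using itot'_k sq E_def by simp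
      next
        case 3
        have "(itot' j)\<^sup>2 \<le> (itot j)\<^sup>2" using itot'_gt[OF 3 jK] by (intro power_mono) auto
        then show ?thesis using Fe[OF jK] 3 lk unfolding e'_def by auto
      qed
    qed
    fix m assume mN: "m < N"
    show "s' m (Suc j) = s' m j + eta m * i' m j"
    proof (cases "m = n")
      case False then show ?thesis using Fs[OF jK mN] unfolding s'_def i'_def by simp
    next
      case True
      consider "j < k" | "j = k" | "k < j" by linarith
      then show ?thesis
      proof cases
        case 1 then show ?thesis using True Fs[OF jK mN] unfolding s'_def i'_def by simp
      next
        case 2
        have "max (s n (Suc k)) a = a" using a_gt sk_def by simp
        then show ?thesis using True 2 sk_eq unfolding s'_def i'_def a_def by (simp add: algebra_simps)
      next
        case 3 then show ?thesis using True eta_pos unfolding s'_def i'_def by simp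
      qed
    qed
    show "shat sbar kbar m (Suc j) \<le> s' m (Suc j)" using Fsh[OF jK mN] s'_ge[of m "Suc j"] by simp
    show "s' m (Suc j) \<le> 1" using Fs1[OF jK mN] a1 unfolding s'_def by auto
    show "0 \<le> i' m j" using i'_nn[OF mN jK] .
    show "i' m j \<le> imax m"
    proof (cases "j = k")
      case True then show ?thesis using eps1 Fim[OF jK mN] unfolding i'_def by auto
    next
      case False then show ?thesis using i'_le[OF mN jK False] Fim[OF jK mN] by simp
    qed
  qed
  have key: "q n * (a - 1)\<^sup>2 + r n * (i n k + eps)\<^sup>2 < q n * (sk - 1)\<^sup>2 + r n * (i n k)\<^sup>2"
  proof -
    have id: "q n * (sk - 1)\<^sup>2 + r n * (i n k)\<^sup>2 - (q n * (a - 1)\<^sup>2 + r n * (i n k + eps)\<^sup>2)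
        = eps * (2 * G - D * eps)"
      unfolding a_def G_def D_def by (simp add: power2_eq_square algebra_simps)
    have "D * eps \<le> G" using eps4 Dpos by (simp add: field_simps)
    then have "2 * G - D * eps > 0" using Gpos by simp
    then have "eps * (2 * G - D * eps) > 0" using eps_pos by simp
    then show ?thesis using id by simp
  qed
  have "cost N K q r i' s' < cost N K q r i s"
    unfolding cost_def
  proof (rule sum_strict_mono_ex1)
    show "finite {..<N}" by simp
    have inner: "(\<Sum>j<K. q n * (s' n (Suc j) - 1)\<^sup>2 + r n * (i' n j)\<^sup>2)
        < (\<Sum>j<K. q n * (s n (Suc j) - 1)\<^sup>2 + r n * (i n j)\<^sup>2)"
    proof (rule sum_strict_mono_ex1)
      show "finite {..<K}" by simp
      show "\<forall>j\<in>{..<K}. q n * (s' n (Suc j) - 1)\<^sup>2 + r n * (i' n j)\<^sup>2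
          \<le> q n * (s n (Suc j) - 1)\<^sup>2 + r n * (i n j)\<^sup>2"
      proof
        fix j assume "j \<in> {..<K}"
        then have jK: "j < K" by simp
        consider "j < k" | "j = k" | "k < j" by linarith
        then show "q n * (s' n (Suc j) - 1)\<^sup>2 + r n * (i' n j)\<^sup>2
          \<le> q n * (s n (Suc j) - 1)\<^sup>2 + r n * (i n j)\<^sup>2"
        proof cases
          case 1 then show ?thesis unfolding s'_def i'_def by simp
        next
          case 2
          have "max (s n (Suc k)) a = a" using a_gt sk_def by simp
          then show ?thesis using key 2 sk_def unfolding s'_def i'_def by simp
        next
          case 3
          have h1: "s n (Suc j) \<le> s' n (Suc j)" "s' n (Suc j) \<le> 1"
            using s'_ge Fs1[OF jK nN] a1 unfolding s'_def by auto
          have "(s' n (Suc j) - 1)\<^sup>2 \<le> (s n (Suc j) - 1)\<^sup>2"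
          proof -
            have "(1 - s' n (Suc j))\<^sup>2 \<le> (1 - s n (Suc j))\<^sup>2" using h1 by (intro power_mono) auto
            then show ?thesis by (simp add: power2_commute)
          qed
          moreover have "(i' n j)\<^sup>2 \<le> (i n j)\<^sup>2"
            using i'_nn[OF nN jK] i'_le[OF nN jK] 3 by (intro power_mono) auto
          ultimately show ?thesis using qpos rnn by (intro add_mono mult_left_mono) auto
        qed
      qed
      show "\<exists>j\<in>{..<K}. q n * (s' n (Suc j) - 1)\<^sup>2 + r n * (i' n j)\<^sup>2
          < q n * (s n (Suc j) - 1)\<^sup>2 + r n * (i n j)\<^sup>2"
      proof (rule bexI[of _ k])
        have "max (s n (Suc k)) a = a" using a_gt sk_def by simp
        then show "q n * (s' n (Suc k) - 1)\<^sup>2 + r n * (i' n k)\<^sup>2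
          < q n * (s n (Suc k) - 1)\<^sup>2 + r n * (i n k)\<^sup>2"
          using key sk_def unfolding s'_def i'_def by simp
        show "k \<in> {..<K}" using kK by simp
      qed
    qed
    show "\<forall>m\<in>{..<N}. (\<Sum>j<K. q m * (s' m (Suc j) - 1)\<^sup>2 + r m * (i' m j)\<^sup>2)
        \<le> (\<Sum>j<K. q m * (s m (Suc j) - 1)\<^sup>2 + r m * (i m j)\<^sup>2)"
    proof
      fix m assume "m \<in> {..<N}"
      show "(\<Sum>j<K. q m * (s' m (Suc j) - 1)\<^sup>2 + r m * (i' m j)\<^sup>2)
        \<le> (\<Sum>j<K. q m * (s m (Suc j) - 1)\<^sup>2 + r m * (i m j)\<^sup>2)"
      proof (cases "m = n")
        case True then show ?thesis using inner by simp
      next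
        case False then show ?thesis unfolding s'_def i'_def by simp
      qed
    qed
    show "\<exists>m\<in>{..<N}. (\<Sum>j<K. q m * (s' m (Suc j) - 1)\<^sup>2 + r m * (i' m j)\<^sup>2)
        < (\<Sum>j<K. q m * (s m (Suc j) - 1)\<^sup>2 + r m * (i m j)\<^sup>2)"
      using inner nN by blast
  qed
  with minc[OF feas'] show False by simp
qed

end
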